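(* Let $\pi=(O,h)$ be the complete prefix unfolding of a bounded net system and let $e_1,e_2$ be events of $\pi$. If $e_1\triangleright e_2$, then $e_1<_{ear}e_2$.
   Context: Occurrence net $O=(C,E,G)$ (conditions $C$, events $E$); $x<y$ iff there is a directed path with at least one arc from $x$ to $y$. For a set of nodes $Y$, $\bullet Y=\bigcup_{y\in Y}\bullet y$; thus $\bullet(\bullet e)$ is the set of events having an output condition in the preset of $e$. For a set of events $E_0$, $Max(E_0)=\{e\in E_0\mid\forall e'\in E_0:e\not<e'\}$. Max-Event Adjacency: for events $e_1<e_2$, $e_1\triangleright e_2$ iff $e_1\in Max(\bullet(\bullet e_2))$. A bounded net system is one whose reachable markings are uniformly bounded; $\pi=(O,h)$ is its complete prefix unfolding in the sense of McMillan/Esparza ($h$ maps conditions to places and events to transitions; the prefix is the greatest backward closed subnet of the unfolding containing no events after a cut-off event). The prefix is viewed as a net whose initial marking marks exactly the minimal conditions; its reachable markings are the sets $Cut(\mathcal C)=(Min(O)\cup\mathcal C\bullet)\setminus\bullet\mathcal C$ for configurations $\mathcal C$ (conflict-free backward closed sets of events). Event adjacency relation: $e_1<_{ear}e_2$ iff there exist reachable markings $M_1,M_1',M_2,M_2'$ of $\pi$ with $M_1\xrightarrow{e_1}M_1'$, $M_2\xrightarrow{e_2}M_2'$ and $h(M_2)=h(M_1')$. *)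

theory Defs
  imports Main
begin

text \<open>A net system is given by a finite set of places P (type 'p), a finite set
of transitions T (type 't), the arcs place-to-transition Fin and
transition-to-place Fout (flow relation F = Fin \<union> Fout), and an initial
marking M0 (a multiset of places).\<close>

definition pret :: "('p \<times> 't) set \<Rightarrow> 't \<Rightarrow> 'p set" where
  "pret Fin t = {p. (p, t) \<in> Fin}"

definition postt :: "('t \<times> 'p) set \<Rightarrow> 't \<Rightarrow> 'p set" where
  "postt Fout t = {p. (t, p) \<in> Fout}"

definition net_system ::
  "'p set \<Rightarrow> 't set \<Rightarrow> ('p \<times> 't) set \<Rightarrow> ('t \<times> 'p) set \<Rightarrow> ('p \<Rightarrow> nat) \<Rightarrow> bool" where
  "net_system P T Fin Fout M0 \<longleftrightarrow>
     finite P \<and> finite T \<and> Fin \<subseteq> P \<times> T \<and> Fout \<subseteq> T \<times> P \<and> (\<forall>p. p \<notin> P \<longrightarrow> M0 p = 0)"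

definition enabled :: "('p \<times> 't) set \<Rightarrow> ('p \<Rightarrow> nat) \<Rightarrow> 't \<Rightarrow> bool" where
  "enabled Fin M t \<longleftrightarrow> (\<forall>p \<in> pret Fin t. 1 \<le> M p)"

definition fire :: "('p \<times> 't) set \<Rightarrow> ('t \<times> 'p) set \<Rightarrow> ('p \<Rightarrow> nat) \<Rightarrow> 't \<Rightarrow> ('p \<Rightarrow> nat)" where
  "fire Fin Fout M t = (\<lambda>p. M p - (if p \<in> pret Fin t then 1 else 0)
                              + (if p \<in> postt Fout t then 1 else 0))"

inductive reachable ::
  "'t set \<Rightarrow> ('p \<times> 't) set \<Rightarrow> ('t \<times> 'p) set \<Rightarrow> ('p \<Rightarrow> nat) \<Rightarrow> ('p \<Rightarrow> nat) \<Rightarrow> bool"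
  for T Fin Fout M0 where
    init: "reachable T Fin Fout M0 M0"
  | step: "reachable T Fin Fout M0 M \<Longrightarrow> t \<in> T \<Longrightarrow> enabled Fin M t \<Longrightarrow>
           reachable T Fin Fout M0 (fire Fin Fout M t)"

definition bounded_system ::
  "'t set \<Rightarrow> ('p \<times> 't) set \<Rightarrow> ('t \<times> 'p) set \<Rightarrow> ('p \<Rightarrow> nat) \<Rightarrow> bool" where
  "bounded_system T Fin Fout M0 \<longleftrightarrow>
     (\<exists>k::nat. \<forall>M. reachable T Fin Fout M0 M \<longrightarrow> (\<forall>p. M p \<le> k))"

definition preN :: "('n \<times> 'n) set \<Rightarrow> 'n \<Rightarrow> 'n set" where
  "preN G x = {y. (y, x) \<in> G}"

definition postN :: "('n \<times> 'n) set \<Rightarrow> 'n \<Rightarrow> 'n set" where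
  "postN G x = {y. (x, y) \<in> G}"

definition preS :: "('n \<times> 'n) set \<Rightarrow> 'n set \<Rightarrow> 'n set" where
  "preS G Y = (\<Union>y\<in>Y. preN G y)"

definition postS :: "('n \<times> 'n) set \<Rightarrow> 'n set \<Rightarrow> 'n set" where
  "postS G Y = (\<Union>y\<in>Y. postN G y)"

definition lessN :: "('n \<times> 'n) set \<Rightarrow> 'n \<Rightarrow> 'n \<Rightarrow> bool" where
  "lessN G x y \<longleftrightarrow> (x, y) \<in> G\<^sup>+"

definition leqN :: "('n \<times> 'n) set \<Rightarrow> 'n \<Rightarrow> 'n \<Rightarrow> bool" where
  "leqN G x y \<longleftrightarrow> x = y \<or> lessN G x y"

definition conflict :: "'n set \<Rightarrow> ('n \<times> 'n) set \<Rightarrow> 'n \<Rightarrow> 'n \<Rightarrow> bool" where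
  "conflict E G x y \<longleftrightarrow>
     (\<exists>e1 e2. e1 \<in> E \<and> e2 \<in> E \<and> e1 \<noteq> e2 \<and> preN G e1 \<inter> preN G e2 \<noteq> {} \<and>
              leqN G e1 x \<and> leqN G e2 y)"

definition occurrence_net :: "'n set \<Rightarrow> 'n set \<Rightarrow> ('n \<times> 'n) set \<Rightarrow> bool" where
  "occurrence_net C E G \<longleftrightarrow>
     C \<inter> E = {} \<and> G \<subseteq> (C \<times> E) \<union> (E \<times> C) \<and>
     (\<forall>x. \<not> lessN G x x) \<and>
     (\<forall>c \<in> C. finite (preN G c) \<and> card (preN G c) \<le> 1) \<and>
     (\<forall>x. finite {y. lessN G y x}) \<and>
     (\<forall>x \<in> C \<union> E. \<not> conflict E G x x)"

definition MinO :: "'n set \<Rightarrow> ('n \<times> 'n) set \<Rightarrow> 'n set" where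
  "MinO C G = {c \<in> C. preN G c = {}}"

definition MaxE :: "('n \<times> 'n) set \<Rightarrow> 'n set \<Rightarrow> 'n set" where
  "MaxE G E0 = {e \<in> E0. \<forall>e' \<in> E0. \<not> lessN G e e'}"

definition max_adj :: "('n \<times> 'n) set \<Rightarrow> 'n \<Rightarrow> 'n \<Rightarrow> bool" where
  "max_adj G e1 e2 \<longleftrightarrow> lessN G e1 e2 \<and> e1 \<in> MaxE G (preS G (preN G e2))"

definition co_rel :: "'n set \<Rightarrow> ('n \<times> 'n) set \<Rightarrow> 'n \<Rightarrow> 'n \<Rightarrow> bool" where
  "co_rel E G x y \<longleftrightarrow> \<not> lessN G x y \<and> \<not> lessN G y x \<and> \<not> conflict E G x y"

definition co_set :: "'n set \<Rightarrow> ('n \<times> 'n) set \<Rightarrow> 'n set \<Rightarrow> bool" where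
  "co_set E G B \<longleftrightarrow> (\<forall>x \<in> B. \<forall>y \<in> B. x \<noteq> y \<longrightarrow> co_rel E G x y)"

definition hmark :: "('n \<Rightarrow> 'p) \<Rightarrow> 'n set \<Rightarrow> 'p \<Rightarrow> nat" where
  "hmark hC M p = card {c \<in> M. hC c = p}"

text \<open>The homomorphism h is split into its restriction hC to conditions
(into places) and hE to events (into transitions).\<close>

definition branching_process ::
  "'p set \<Rightarrow> 't set \<Rightarrow> ('p \<times> 't) set \<Rightarrow> ('t \<times> 'p) set \<Rightarrow> ('p \<Rightarrow> nat) \<Rightarrow>
   'n set \<Rightarrow> 'n set \<Rightarrow> ('n \<times> 'n) set \<Rightarrow> ('n \<Rightarrow> 'p) \<Rightarrow> ('n \<Rightarrow> 't) \<Rightarrow> bool" where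
  "branching_process P T Fin Fout M0 C E G hC hE \<longleftrightarrow>
     occurrence_net C E G \<and> hC ` C \<subseteq> P \<and> hE ` E \<subseteq> T \<and>
     (\<forall>e \<in> E. bij_betw hC (preN G e) (pret Fin (hE e)) \<and>
              bij_betw hC (postN G e) (postt Fout (hE e))) \<and>
     finite (MinO C G) \<and> (\<forall>p. hmark hC (MinO C G) p = M0 p) \<and>
     (\<forall>e1 \<in> E. \<forall>e2 \<in> E. preN G e1 = preN G e2 \<and> hE e1 = hE e2 \<longrightarrow> e1 = e2)"

text \<open>The unfolding: the maximal branching process, characterized (up to
isomorphism) as a branching process admitting no further possible extension.\<close>
definition is_unfolding ::
  "'p set \<Rightarrow> 't set \<Rightarrow> ('p \<times> 't) set \<Rightarrow> ('t \<times> 'p) set \<Rightarrow> ('p \<Rightarrow> nat) \<Rightarrow>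
   'n set \<Rightarrow> 'n set \<Rightarrow> ('n \<times> 'n) set \<Rightarrow> ('n \<Rightarrow> 'p) \<Rightarrow> ('n \<Rightarrow> 't) \<Rightarrow> bool" where
  "is_unfolding P T Fin Fout M0 C E G hC hE \<longleftrightarrow>
     branching_process P T Fin Fout M0 C E G hC hE \<and>
     (\<forall>t \<in> T. \<forall>B. B \<subseteq> C \<and> co_set E G B \<and> bij_betw hC B (pret Fin t) \<longrightarrow>
                 (\<exists>e \<in> E. preN G e = B \<and> hE e = t))"

definition configuration :: "'n set \<Rightarrow> ('n \<times> 'n) set \<Rightarrow> 'n set \<Rightarrow> bool" where
  "configuration E G K \<longleftrightarrow>
     K \<subseteq> E \<and> finite K \<and>
     (\<forall>e \<in> K. \<forall>e' \<in> E. lessN G e' e \<longrightarrow> e' \<in> K) \<and>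
     (\<forall>x \<in> K. \<forall>y \<in> K. \<not> conflict E G x y)"

definition Cut :: "'n set \<Rightarrow> ('n \<times> 'n) set \<Rightarrow> 'n set \<Rightarrow> 'n set" where
  "Cut C G K = (MinO C G \<union> postS G K) - preS G K"

definition loc :: "'n set \<Rightarrow> ('n \<times> 'n) set \<Rightarrow> 'n \<Rightarrow> 'n set" where
  "loc E G e = {e' \<in> E. leqN G e' e}"

text \<open>McMillan cut-off events (adequate order: size of local configurations).\<close>
definition cutoff :: "'n set \<Rightarrow> 'n set \<Rightarrow> ('n \<times> 'n) set \<Rightarrow> ('n \<Rightarrow> 'p) \<Rightarrow> 'n \<Rightarrow> bool" where
  "cutoff C E G hC e \<longleftrightarrow>
     e \<in> E \<and> (\<exists>e' \<in> E. hmark hC (Cut C G (loc E G e')) = hmark hC (Cut C G (loc E G e)) \<and>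
                        card (loc E G e') < card (loc E G e))"

definition complete_prefix ::
  "'n set \<Rightarrow> 'n set \<Rightarrow> ('n \<times> 'n) set \<Rightarrow> ('n \<Rightarrow> 'p) \<Rightarrow> 'n set \<times> 'n set \<times> ('n \<times> 'n) set" where
  "complete_prefix C E G hC =
     (let Ep = {e \<in> E. \<forall>e' \<in> E. lessN G e' e \<longrightarrow> \<not> cutoff C E G hC e'};
          Cp = {c \<in> C. \<forall>e \<in> preN G c. e \<in> Ep}
      in (Cp, Ep, G \<inter> ((Cp \<union> Ep) \<times> (Cp \<union> Ep))))"

definition reach_mark :: "'n set \<Rightarrow> 'n set \<Rightarrow> ('n \<times> 'n) set \<Rightarrow> 'n set \<Rightarrow> bool" where
  "reach_mark C E G M \<longleftrightarrow> (\<exists>K. configuration E G K \<and> M = Cut C G K)"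

definition occ_step :: "'n set \<Rightarrow> ('n \<times> 'n) set \<Rightarrow> 'n set \<Rightarrow> 'n \<Rightarrow> 'n set \<Rightarrow> bool" where
  "occ_step E G M e M' \<longleftrightarrow> e \<in> E \<and> preN G e \<subseteq> M \<and> M' = (M - preN G e) \<union> postN G e"

definition ear :: "'n set \<Rightarrow> 'n set \<Rightarrow> ('n \<times> 'n) set \<Rightarrow> ('n \<Rightarrow> 'p) \<Rightarrow> 'n \<Rightarrow> 'n \<Rightarrow> bool" where
  "ear C E G hC e1 e2 \<longleftrightarrow>
     (\<exists>M1 M1' M2 M2'. reach_mark C E G M1 \<and> reach_mark C E G M1' \<and>
        reach_mark C E G M2 \<and> reach_mark C E G M2' \<and>
        occ_step E G M1 e1 M1' \<and> occ_step E G M2 e2 M2' \<and> hmark hC M2 = hmark hC M1')"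

end

theory Submission
  imports Defs
begin

lemma lessN_trans: "lessN G x y \<Longrightarrow> lessN G y z \<Longrightarrow> lessN G x z"
  unfolding lessN_def by auto
lemma leqN_trans: "leqN G x y \<Longrightarrow> leqN G y z \<Longrightarrow> leqN G x z"
  unfolding leqN_def using lessN_trans by metis
lemma conflict_mono_leq:
  "conflict E G x y \<Longrightarrow> leqN G x x' \<Longrightarrow> leqN G y y' \<Longrightarrow> conflict E G x' y'"
proof -
  assume a: "conflict E G x y" "leqN G x x'" "leqN G y y'"
  then obtain e1 e2 where e: "e1 \<in> E" "e2 \<in> E" "e1 \<noteq> e2" "preN G e1 \<inter> preN G e2 \<noteq> {}"
    "leqN G e1 x" "leqN G e2 y" unfolding conflict_def by blast
  have "leqN G e1 x'" "leqN G e2 y'" using leqN_trans[OF e(5) a(2)] leqN_trans[OF e(6) a(3)] by auto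
  thus ?thesis unfolding conflict_def using e by blast
qed
lemma lessN_sub: "G' \<subseteq> G \<Longrightarrow> lessN G' x y \<Longrightarrow> lessN G x y"
  unfolding lessN_def by (rule trancl_mono)
lemma leqN_sub: "G' \<subseteq> G \<Longrightarrow> leqN G' x y \<Longrightarrow> leqN G x y"
  unfolding leqN_def using lessN_sub[of G' G x y] by auto
lemma conflict_sub: "E' \<subseteq> E \<Longrightarrow> G' \<subseteq> G \<Longrightarrow> conflict E' G' x y \<Longrightarrow> conflict E G x y"
proof -
  assume a: "E' \<subseteq> E" "G' \<subseteq> G" "conflict E' G' x y"
  then obtain e1 e2 where e: "e1 \<in> E'" "e2 \<in> E'" "e1 \<noteq> e2" "preN G' e1 \<inter> preN G' e2 \<noteq> {}"
    "leqN G' e1 x" "leqN G' e2 y" unfolding conflict_def by blast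
  have "preN G' e1 \<subseteq> preN G e1" "preN G' e2 \<subseteq> preN G e2" using a(2) unfolding preN_def by auto
  hence "preN G e1 \<inter> preN G e2 \<noteq> {}" using e(4) by blast
  moreover have "leqN G e1 x" "leqN G e2 y" using leqN_sub[OF a(2) e(5)] leqN_sub[OF a(2) e(6)] by auto
  moreover have "e1 \<in> E" "e2 \<in> E" using e(1,2) a(1) by auto
  ultimately show ?thesis unfolding conflict_def using e(3) by blast
qed

lemma step_lemma:
  assumes CE: "C \<inter> E = {}" and GS: "G \<subseteq> (C \<times> E) \<union> (E \<times> C)"
    and irr: "\<forall>x. \<not> lessN G x x"
    and K: "configuration E G K" and L: "configuration E G (insert e K)"
    and eE: "e \<in> E" and eK: "e \<notin> K"
    and nmax: "\<forall>e'\<in>K. \<not> lessN G e e'"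
  shows "occ_step E G (Cut C G K) e (Cut C G (insert e K))"
proof -
  have pre: "preN G e \<subseteq> Cut C G K"
  proof
    fix c assume c: "c \<in> preN G e"
    hence cG: "(c,e) \<in> G" by (simp add: preN_def)
    hence cC: "c \<in> C" using GS CE eE by auto
    have "c \<in> MinO C G \<union> postS G K"
    proof (cases "preN G c = {}")
      case True thus ?thesis using cC by (simp add: MinO_def)
    next
      case False
      then obtain f where f: "(f,c) \<in> G" by (auto simp: preN_def)
      hence fE: "f \<in> E" using GS CE cC by auto
      have "lessN G f e" using f cG unfolding lessN_def by auto
      hence "f \<in> insert e K" using L fE eE unfolding configuration_def by blast
      moreover have "f \<noteq> e" using \<open>lessN G f e\<close> irr by auto
      ultimately have "f \<in> K" by auto
      thus ?thesis using f by (auto simp: postS_def postN_def)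
    qed
    moreover have "c \<notin> preS G K"
    proof
      assume "c \<in> preS G K"
      then obtain e' where e': "e' \<in> K" "(c,e') \<in> G" by (auto simp: preS_def preN_def)
      have "e' \<in> E" using K e' unfolding configuration_def by auto
      hence "conflict E G e e'" unfolding conflict_def leqN_def
        using eE e' cG eK by (auto simp: preN_def)
      thus False using L e' unfolding configuration_def by auto
    qed
    ultimately show "c \<in> Cut C G K" by (simp add: Cut_def)
  qed
  have d1: "postN G e \<inter> preS G K = {}"
  proof (rule ccontr)
    assume "postN G e \<inter> preS G K \<noteq> {}"
    then obtain c e' where "(e,c) \<in> G" "(c,e') \<in> G" "e' \<in> K"
      by (auto simp: postN_def preS_def preN_def)
    hence "lessN G e e'" unfolding lessN_def by auto
    thus False using nmax \<open>e' \<in> K\<close> by auto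
  qed
  have d2: "postN G e \<inter> preN G e = {}"
  proof (rule ccontr)
    assume "postN G e \<inter> preN G e \<noteq> {}"
    then obtain c where "(e,c) \<in> G" "(c,e) \<in> G" by (auto simp: postN_def preN_def)
    hence "lessN G e e" unfolding lessN_def by auto
    thus False using irr by auto
  qed
  have pS: "preS G (insert e K) = preN G e \<union> preS G K" by (auto simp: preS_def)
  have qS: "postS G (insert e K) = postN G e \<union> postS G K" by (auto simp: postS_def)
  have "Cut C G (insert e K) = (Cut C G K - preN G e) \<union> postN G e"
    unfolding Cut_def pS qS using d1 d2 by blast
  thus ?thesis using pre eE by (simp add: occ_step_def)
qed

theorem proposition5:
  fixes P :: "'p set" and T :: "'t set" and Fin :: "('p \<times> 't) set"
    and Fout :: "('t \<times> 'p) set" and M0 :: "'p \<Rightarrow> nat"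
    and C E :: "'n set" and G :: "('n \<times> 'n) set" and hC :: "'n \<Rightarrow> 'p" and hE :: "'n \<Rightarrow> 't"
  assumes "net_system P T Fin Fout M0"
    and "bounded_system T Fin Fout M0"
    and "is_unfolding P T Fin Fout M0 C E G hC hE"
    and "complete_prefix C E G hC = (Cp, Ep, Gp)"
    and "e1 \<in> Ep" and "e2 \<in> Ep"
    and "max_adj Gp e1 e2"
  shows "ear Cp Ep Gp hC e1 e2"
proof -
  have occ: "occurrence_net C E G" using assms(3)
    unfolding is_unfolding_def branching_process_def by auto
  have Cpd: "Cp \<subseteq> C" and Epd: "Ep \<subseteq> E" and Gpd: "Gp = G \<inter> ((Cp \<union> Ep) \<times> (Cp \<union> Ep))"
    using assms(4) unfolding complete_prefix_def Let_def by auto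
  have GpG: "Gp \<subseteq> G" using Gpd by blast
  have o1: "C \<inter> E = {}" and o2: "G \<subseteq> (C \<times> E) \<union> (E \<times> C)"
    and o3: "\<forall>x. \<not> lessN G x x" and o5: "\<forall>x. finite {y. lessN G y x}"
    and o6: "\<forall>x \<in> C \<union> E. \<not> conflict E G x x"
    using occ unfolding occurrence_net_def by blast+
  have CE: "Cp \<inter> Ep = {}" using o1 Cpd Epd by blast
  have GS: "Gp \<subseteq> (Cp \<times> Ep) \<union> (Ep \<times> Cp)"
  proof
    fix x assume "x \<in> Gp"
    then obtain a b where x: "x = (a,b)" "(a,b) \<in> G" "a \<in> Cp \<union> Ep" "b \<in> Cp \<union> Ep" using Gpd by blast
    thus "x \<in> (Cp \<times> Ep) \<union> (Ep \<times> Cp)" using o1 o2 Cpd Epd by blast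
  qed
  have irr: "\<forall>x. \<not> lessN Gp x x" using o3 lessN_sub[OF GpG] by blast
  have fin: "finite {y. lessN Gp y e2}"
  proof (rule finite_subset)
    show "{y. lessN Gp y e2} \<subseteq> {y. lessN G y e2}" using lessN_sub[OF GpG] by blast
    show "finite {y. lessN G y e2}" using o5 by blast
  qed
  have nc: "\<not> conflict Ep Gp e2 e2"
  proof
    assume "conflict Ep Gp e2 e2"
    hence "conflict E G e2 e2" by (rule conflict_sub[OF Epd GpG])
    moreover have "e2 \<in> C \<union> E" using assms(6) Epd by blast
    ultimately show False using o6 by blast
  qed
  have lt12: "lessN Gp e1 e2" and mx: "e1 \<in> MaxE Gp (preS Gp (preN Gp e2))"
    using assms(7) unfolding max_adj_def by auto
  define K where "K = {e\<in>Ep. lessN Gp e e2}"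
  define K' where "K' = K - {e1}"
  have conf: "configuration Ep Gp X" if "X \<subseteq> insert e2 K"
     and dc: "\<forall>e \<in> X. \<forall>e' \<in> Ep. lessN Gp e' e \<longrightarrow> e' \<in> X" for X
  proof -
    have "X \<subseteq> Ep" using that assms(6) K_def by auto
    moreover have "finite X"
    proof (rule finite_subset)
      show "X \<subseteq> insert e2 {y. lessN Gp y e2}" using that(1) unfolding K_def by blast
      show "finite (insert e2 {y. lessN Gp y e2})" using fin by simp
    qed
    moreover have "\<forall>x\<in>X. leqN Gp x e2" using that(1) unfolding K_def leqN_def by auto
    hence "\<forall>x \<in> X. \<forall>y \<in> X. \<not> conflict Ep Gp x y"
      using nc conflict_mono_leq[of Ep Gp _ _ e2 e2] by blast
    ultimately show ?thesis using dc unfolding configuration_def by blast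
  qed
  have e1K: "e1 \<in> K" using K_def assms(5) lt12 by auto
  have e2K: "e2 \<notin> K" using K_def irr by auto
  have max1: "\<forall>e'\<in>K. \<not> lessN Gp e1 e'"
  proof (intro ballI notI)
    fix e' assume e': "e' \<in> K" "lessN Gp e1 e'"
    hence "(e', e2) \<in> Gp\<^sup>+" "e' \<in> Ep" unfolding K_def lessN_def by auto
    then obtain c where c: "(e',c) \<in> Gp\<^sup>*" "(c,e2) \<in> Gp"
      using tranclD2[OF \<open>(e', e2) \<in> Gp\<^sup>+\<close>] by blast
    have "c \<noteq> e'" using c(2) GS CE \<open>e' \<in> Ep\<close> assms(6) by auto
    then obtain f where f: "(e',f) \<in> Gp\<^sup>*" "(f,c) \<in> Gp"
      using rtranclE[OF c(1)] by blast
    have "f \<in> preS Gp (preN Gp e2)" using f c by (auto simp: preS_def preN_def)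
    moreover have "lessN Gp e1 f" using e'(2) f(1) unfolding lessN_def by auto
    moreover have "\<forall>e'\<in>preS Gp (preN Gp e2). \<not> lessN Gp e1 e'" using mx unfolding MaxE_def by simp
    ultimately show False by blast
  qed
  have max2: "\<forall>e'\<in>K. \<not> lessN Gp e2 e'"
  proof (intro ballI notI)
    fix e' assume "e' \<in> K" "lessN Gp e2 e'"
    hence "lessN Gp e2 e2" using lessN_trans[of Gp e2 e' e2] unfolding K_def by simp
    thus False using irr by simp
  qed
  have dK: "\<forall>e \<in> K. \<forall>e' \<in> Ep. lessN Gp e' e \<longrightarrow> e' \<in> K"
  proof (intro ballI impI)
    fix e e' assume "e \<in> K" "e' \<in> Ep" "lessN Gp e' e"
    hence "lessN Gp e' e2" using lessN_trans[of Gp e' e e2] unfolding K_def by simp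
    thus "e' \<in> K" using \<open>e' \<in> Ep\<close> unfolding K_def by simp
  qed
  have cK: "configuration Ep Gp K"
    by (rule conf[OF _ dK]) auto
  have dK': "\<forall>e \<in> K'. \<forall>e' \<in> Ep. lessN Gp e' e \<longrightarrow> e' \<in> K'"
  proof (intro ballI impI)
    fix e e' assume a: "e \<in> K'" "e' \<in> Ep" "lessN Gp e' e"
    hence "e' \<in> K" using dK unfolding K'_def by blast
    moreover have "e' \<noteq> e1" using a max1 unfolding K'_def by auto
    ultimately show "e' \<in> K'" unfolding K'_def by simp
  qed
  have cK': "configuration Ep Gp K'"
    by (rule conf[OF _ dK']) (auto simp: K'_def)
  have dL: "\<forall>e \<in> insert e2 K. \<forall>e' \<in> Ep. lessN Gp e' e \<longrightarrow> e' \<in> insert e2 K"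
  proof (intro ballI impI)
    fix e e' assume a: "e \<in> insert e2 K" "e' \<in> Ep" "lessN Gp e' e"
    show "e' \<in> insert e2 K"
    proof (cases "e = e2")
      case True thus ?thesis using a unfolding K_def by simp
    next
      case False thus ?thesis using a dK by simp
    qed
  qed
  have cL: "configuration Ep Gp (insert e2 K)"
    by (rule conf[OF _ dL]) auto
  have iK: "insert e1 K' = K" using e1K K'_def by auto
  have s1: "occ_step Ep Gp (Cut Cp Gp K') e1 (Cut Cp Gp K)"
    using step_lemma[OF CE GS irr cK', of e1] iK cK assms(5) max1 K'_def by auto
  have s2: "occ_step Ep Gp (Cut Cp Gp K) e2 (Cut Cp Gp (insert e2 K))"
    using step_lemma[OF CE GS irr cK cL assms(6) e2K max2] .
  have r1: "reach_mark Cp Ep Gp (Cut Cp Gp K')" using cK' unfolding reach_mark_def by blast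
  have r2: "reach_mark Cp Ep Gp (Cut Cp Gp K)" using cK unfolding reach_mark_def by blast
  have r3: "reach_mark Cp Ep Gp (Cut Cp Gp (insert e2 K))" using cL unfolding reach_mark_def by blast
  show ?thesis unfolding ear_def
    apply (rule exI[of _ "Cut Cp Gp K'"], rule exI[of _ "Cut Cp Gp K"])
    apply (rule exI[of _ "Cut Cp Gp K"], rule exI[of _ "Cut Cp Gp (insert e2 K)"])
    using r1 r2 r3 s1 s2 by simp
qed

end
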